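(* Let $n$ be an even integer, $w\le n$, $i,t\le n/2$ and $s\le t$ nonnegative integers. Let ${\mathbf{a}},{\mathbf{b}},{\mathbf{c}},{\mathbf{d}}\in\mathbb{F}_3^{n/2}$ with $a_id_i-b_ic_i=1$ and $a_ic_i\neq0$ for all $i$. Let $\widetilde{{\mathbf{e}}}=({\mathbf{e}}_1,{\mathbf{e}}_2)$ be uniformly distributed over the vectors of $\mathbb{F}_3^n$ of Hamming weight $w$ (with ${\mathbf{e}}_1,{\mathbf{e}}_2\in\mathbb{F}_3^{n/2}$), and $\widetilde{{\mathbf{e}}}_V=-{\mathbf{c}}\odot{\mathbf{e}}_1+{\mathbf{a}}\odot{\mathbf{e}}_2$. Let $\widetilde q_1(i)=\mathbb{P}(|\widetilde{{\mathbf{e}}}_V|=i)$ and $\widetilde q_2(s,t)=\mathbb{P}(m_1(\widetilde{{\mathbf{e}}})=s\mid|\widetilde{{\mathbf{e}}}_V|=t)$. Then $$\widetilde q_1(i)=\frac{\binom{n/2}{i}}{\binom{n}{w}2^{w/2}}\sum_{\substack{p=0\\ w+p\equiv0\bmod 2}}^{i}\binom{i}{p}\binom{n/2-i}{(w+p)/2-i}2^{3p/2},$$ and $$\widetilde q_2(s,t)=\begin{cases}\dfrac{\binom{t}{s}\binom{n/2-t}{\frac{w+s}{2}-t}2^{3s/2}}{\sum_{p\equiv w \bmod 2}\binom{t}{p}\binom{n/2-t}{\frac{w+p}{2}-t}2^{3p/2}} & \text{if } w+s\equiv 0\bmod 2,\\ 0&\text{otherwise.}\end{cases}$$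
   Context: $|{\mathbf{x}}|$ is the Hamming weight; $\odot$ the componentwise product; for ${\mathbf{x}}\in\mathbb{F}_3^n$, $m_1({\mathbf{x}})=|\{1\le i\le n/2: |(x_i,x_{i+n/2})|=1\}|$. Binomial coefficients $\binom{m}{j}$ with $j<0$ or $j>m$ are $0$; $p$ ranges over nonnegative integers with $p\le t$. *)

theory Defs
  imports Complex_Main "HOL-Library.Numeral_Type"
begin

text \<open>Vectors of F_3^n are modelled as functions nat => 3 (3 is the ring Z/3Z from
Numeral_Type) that vanish outside the index range {0..<n}.  Index j < n/2 of
e_1 is e j, index j of e_2 is e (j + n/2).\<close>

definition vecs :: "nat \<Rightarrow> (nat \<Rightarrow> 3) set" where
  "vecs n = {e. \<forall>j\<ge>n. e j = 0}"

definition hw :: "nat \<Rightarrow> (nat \<Rightarrow> 3) \<Rightarrow> nat" where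
  "hw n e = card {j \<in> {0..<n}. e j \<noteq> 0}"

definition eV :: "nat \<Rightarrow> (nat \<Rightarrow> 3) \<Rightarrow> (nat \<Rightarrow> 3) \<Rightarrow> (nat \<Rightarrow> 3) \<Rightarrow> nat \<Rightarrow> 3" where
  "eV n a c e = (\<lambda>j. if j < n div 2 then - c j * e j + a j * e (j + n div 2) else 0)"

definition m1 :: "nat \<Rightarrow> (nat \<Rightarrow> 3) \<Rightarrow> nat" where
  "m1 n e = card {j \<in> {0..<n div 2}.
      card {k \<in> {j, j + n div 2}. e k \<noteq> 0} = 1}"

definition ibinom :: "nat \<Rightarrow> int \<Rightarrow> real" where
  "ibinom m j = (if 0 \<le> j \<and> j \<le> int m then real (m choose nat j) else 0)"

definition wset :: "nat \<Rightarrow> nat \<Rightarrow> (nat \<Rightarrow> 3) set" where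
  "wset n w = {e \<in> vecs n. hw n e = w}"

definition q1 :: "nat \<Rightarrow> nat \<Rightarrow> (nat \<Rightarrow> 3) \<Rightarrow> (nat \<Rightarrow> 3) \<Rightarrow> nat \<Rightarrow> real" where
  "q1 n w a c i = real (card {e \<in> wset n w. hw n (eV n a c e) = i}) / real (card (wset n w))"

text \<open>q2 s t = P(m1(e) = s | |e_V| = t) (ratio of counts; 0 if conditioning event empty).\<close>
definition q2 :: "nat \<Rightarrow> nat \<Rightarrow> (nat \<Rightarrow> 3) \<Rightarrow> (nat \<Rightarrow> 3) \<Rightarrow> nat \<Rightarrow> nat \<Rightarrow> real" where
  "q2 n w a c s t =
     real (card {e \<in> wset n w. m1 n e = s \<and> hw n (eV n a c e) = t})
     / real (card {e \<in> wset n w. hw n (eV n a c e) = t})"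

end

theory Submission imports Defs "HOL-Library.FuncSet" begin
lemma ex3: "(x::3) = 0 \<or> x = 1 \<or> x = 2"
proof (induct x rule: bit1_induct)
  fix z :: int assume "0 \<le> z" "z < int CARD(1 bit1)"
  then have "z < 3" by simp
  with \<open>0 \<le> z\<close> have "z = 0 \<or> z = 1 \<or> z = 2" by arith
  then show "of_int z = (0::3) \<or> of_int z = (1::3) \<or> of_int z = (2::3)" by auto
qed
lemma all3: "(\<forall>x::3. P x) \<longleftrightarrow> P 0 \<and> P 1 \<and> P 2"
  using ex3 by metis
lemma nz3: "(x::3) \<noteq> 0 \<Longrightarrow> x = 1 \<or> x = 2" using ex3 by metis

definition pw :: "3 \<Rightarrow> 3 \<Rightarrow> nat" where
  "pw x y = (if x \<noteq> 0 then 1 else 0) + (if y \<noteq> 0 then 1 else 0)"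

lemma negrw: "(- c * x + a * y = (0::3)) \<longleftrightarrow> a * y = c * x"
  by (metis add.commute add_eq_0_iff eq_neg_iff_add_eq_0 minus_mult_left)

lemma card_P1: "card {(x,y). pw x y = 1} = 4"
proof -
  have "{(x,y). pw x y = 1} = {(1,0),(2,0),(0,1),(0,2::3)}"
    by (simp add: set_eq_iff split_paired_All all3 pw_def)
  then show ?thesis by simp
qed
lemma card_P0: "card {(x,y). pw x y = 0} = 1"
proof -
  have "{(x,y). pw x y = 0} = {(0,0::3)}"
    by (simp add: set_eq_iff split_paired_All all3 pw_def)
  then show ?thesis by simp
qed
lemma card_PB: assumes "a \<noteq> 0" "c \<noteq> 0"
  shows "card {(x,y). pw x y = 2 \<and> - c * x + a * y \<noteq> 0} = 2"
proof -
  from nz3[OF assms(1)] nz3[OF assms(2)] 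
  have "{(x,y). pw x y = 2 \<and> - c * x + a * y \<noteq> 0} = {(1,1),(2,2::3)} \<or> 
        {(x,y). pw x y = 2 \<and> - c * x + a * y \<noteq> 0} = {(1,2),(2,1::3)}"
    by (auto simp add: negrw set_eq_iff split_paired_All all3 pw_def)
  then show ?thesis by auto
qed
lemma card_PC: assumes "a \<noteq> 0" "c \<noteq> 0"
  shows "card {(x,y). pw x y = 2 \<and> - c * x + a * y = 0} = 2"
proof -
  from nz3[OF assms(1)] nz3[OF assms(2)] 
  have "{(x,y). pw x y = 2 \<and> - c * x + a * y = 0} = {(1,1),(2,2::3)} \<or> 
        {(x,y). pw x y = 2 \<and> - c * x + a * y = 0} = {(1,2),(2,1::3)}"
    by (auto simp add: negrw set_eq_iff split_paired_All all3 pw_def)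
  then show ?thesis by auto
qed
lemma pw1: assumes "a \<noteq> 0" "c \<noteq> 0" "pw x y = 1" shows "- c * x + a * y \<noteq> (0::3)"
  using nz3[OF assms(1)] nz3[OF assms(2)] assms(3) ex3[of x] ex3[of y]
  by (auto simp add: negrw pw_def)

lemma pw_le: "pw x y \<le> 2" by (simp add: pw_def)

lemma card_fibers:
  assumes "finite Y" "finite X" "f ` X \<subseteq> Y"
  shows "card X = (\<Sum>y\<in>Y. card {x\<in>X. f x = y})"
proof -
  have "X = (\<Union>y\<in>Y. {x\<in>X. f x = y})" using assms(3) by auto
  then have "card X = card (\<Union>y\<in>Y. {x\<in>X. f x = y})" by simp
  also have "\<dots> = (\<Sum>y\<in>Y. card {x\<in>X. f x = y})"
    by (rule card_UN_disjoint) (use assms in auto)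
  finally show ?thesis .
qed

lemma pair_bij:
  "bij_betw (\<lambda>e. \<lambda>j\<in>{..<h}. (e j, e (j+h))) {e \<in> vecs (2*h). \<forall>j<h. (e j, e (j+h)) \<in> S j}
     (PiE {..<h} S)"
  unfolding bij_betw_def
proof
  show "inj_on (\<lambda>e. \<lambda>j\<in>{..<h}. (e j, e (j+h))) {e \<in> vecs (2*h). \<forall>j<h. (e j, e (j+h)) \<in> S j}"
  proof (rule inj_onI)
    fix e e' assume e: "e \<in> {e \<in> vecs (2*h). \<forall>j<h. (e j, e (j+h)) \<in> S j}"
      and e': "e' \<in> {e \<in> vecs (2*h). \<forall>j<h. (e j, e (j+h)) \<in> S j}"
      and eq: "(\<lambda>j\<in>{..<h}. (e j, e (j+h))) = (\<lambda>j\<in>{..<h}. (e' j, e' (j+h)))"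
    show "e = e'"
    proof
      fix m
      show "e m = e' m"
      proof (cases "m < h")
        case True
        then show ?thesis using fun_cong[OF eq, of m] by simp
      next
        case False
        show ?thesis
        proof (cases "m < 2*h")
          case True
          then have "m - h < h" "m - h + h = m" using False by auto
          then show ?thesis using fun_cong[OF eq, of "m-h"] by simp
        next
          case False
          then show ?thesis using e e' by (simp add: vecs_def)
        qed
      qed
    qed
  qed
next
  show "(\<lambda>e. \<lambda>j\<in>{..<h}. (e j, e (j+h))) ` {e \<in> vecs (2*h). \<forall>j<h. (e j, e (j+h)) \<in> S j} = PiE {..<h} S"
  proof
    show "(\<lambda>e. \<lambda>j\<in>{..<h}. (e j, e (j+h))) ` {e \<in> vecs (2*h). \<forall>j<h. (e j, e (j+h)) \<in> S j} \<subseteq> PiE {..<h} S"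
      by (auto simp: PiE_def extensional_def)
  next
    show "PiE {..<h} S \<subseteq> (\<lambda>e. \<lambda>j\<in>{..<h}. (e j, e (j+h))) ` {e \<in> vecs (2*h). \<forall>j<h. (e j, e (j+h)) \<in> S j}"
    proof
      fix f assume f: "f \<in> PiE {..<h} S"
      define e where "e = (\<lambda>m. if m < h then fst (f m) else if m < 2*h then snd (f (m-h)) else 0)"
      have e1: "\<And>j. j < h \<Longrightarrow> (e j, e (j+h)) = f j" unfolding e_def by simp
      have ev: "e \<in> vecs (2*h)" unfolding vecs_def e_def by auto
      have "(\<lambda>j\<in>{..<h}. (e j, e (j+h))) = f"
      proof
        fix j show "(\<lambda>j\<in>{..<h}. (e j, e (j+h))) j = f j"
          using f e1 by (cases "j < h") (auto simp: PiE_def extensional_def)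
      qed
      moreover have "\<forall>j<h. (e j, e (j+h)) \<in> S j" using e1 f by auto
      ultimately show "f \<in> (\<lambda>e. \<lambda>j\<in>{..<h}. (e j, e (j+h))) ` {e \<in> vecs (2*h). \<forall>j<h. (e j, e (j+h)) \<in> S j}"
        using ev by (intro image_eqI[where x=e]) auto
    qed
  qed
qed

lemma card_pair:
  "card {e \<in> vecs (2*h). \<forall>j<h. (e j, e (j+h)) \<in> S j} = (\<Prod>j<h. card (S j))"
  using bij_betw_same_card[OF pair_bij] card_PiE[of "{..<h}" S] by simp

lemma fin_pair:
  assumes "\<And>j. finite (S j)"
  shows "finite {e \<in> vecs (2*h). \<forall>j<h. (e j, e (j+h)) \<in> S j}"
  using bij_betw_finite[OF pair_bij] assms by (simp add: finite_PiE)

lemma single_bij: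
  "bij_betw (\<lambda>e. \<lambda>j\<in>{..<n}. e j) {e \<in> vecs n. \<forall>j<n. e j \<in> S j} (PiE {..<n} S)"
  unfolding bij_betw_def
proof
  show "inj_on (\<lambda>e. \<lambda>j\<in>{..<n}. e j) {e \<in> vecs n. \<forall>j<n. e j \<in> S j}"
  proof (rule inj_onI)
    fix e e' assume e: "e \<in> {e \<in> vecs n. \<forall>j<n. e j \<in> S j}"
      and e': "e' \<in> {e \<in> vecs n. \<forall>j<n. e j \<in> S j}"
      and eq: "(\<lambda>j\<in>{..<n}. e j) = (\<lambda>j\<in>{..<n}. e' j)"
    show "e = e'"
    proof
      fix m
      show "e m = e' m"
      proof (cases "m < n")
        case True
        then show ?thesis using fun_cong[OF eq, of m] by simp
      next
        case False
        then show ?thesis using e e' by (simp add: vecs_def)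
      qed
    qed
  qed
next
  show "(\<lambda>e. \<lambda>j\<in>{..<n}. e j) ` {e \<in> vecs n. \<forall>j<n. e j \<in> S j} = PiE {..<n} S"
  proof
    show "(\<lambda>e. \<lambda>j\<in>{..<n}. e j) ` {e \<in> vecs n. \<forall>j<n. e j \<in> S j} \<subseteq> PiE {..<n} S"
      by (auto simp: PiE_def extensional_def)
  next
    show "PiE {..<n} S \<subseteq> (\<lambda>e. \<lambda>j\<in>{..<n}. e j) ` {e \<in> vecs n. \<forall>j<n. e j \<in> S j}"
    proof
      fix f assume f: "f \<in> PiE {..<n} S"
      define e where "e = (\<lambda>m. if m < n then f m else 0)"
      have ev: "e \<in> vecs n" unfolding vecs_def e_def by auto
      have "(\<lambda>j\<in>{..<n}. e j) = f"
      proof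
        fix j show "(\<lambda>j\<in>{..<n}. e j) j = f j"
          using f by (cases "j < n") (auto simp: PiE_def extensional_def e_def)
      qed
      moreover have "\<forall>j<n. e j \<in> S j" using f by (auto simp: e_def)
      ultimately show "f \<in> (\<lambda>e. \<lambda>j\<in>{..<n}. e j) ` {e \<in> vecs n. \<forall>j<n. e j \<in> S j}"
        using ev by (intro image_eqI[where x=e]) auto
    qed
  qed
qed

lemma card_single:
  "card {e \<in> vecs n. \<forall>j<n. e j \<in> S j} = (\<Prod>j<n. card (S j))"
  using bij_betw_same_card[OF single_bij] card_PiE[of "{..<n}" S] by simp

lemma fin_vecs: "finite (vecs n)"
proof -
  have "finite {e \<in> vecs n. \<forall>j<n. e j \<in> (\<lambda>_. UNIV::3 set) j}"
    using bij_betw_finite[OF single_bij[of n "\<lambda>_. UNIV"]] by (simp add: finite_PiE)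
  then show ?thesis by simp
qed

lemma prod_ind: assumes "finite H" "S \<subseteq> H"
  shows "(\<Prod>j\<in>H. if j \<in> S then k else 1) = (k::nat) ^ card S"
proof -
  have "(\<Prod>j\<in>H. if j \<in> S then k else 1) = (\<Prod>j\<in>H \<inter> {x. x \<in> S}. k) * (\<Prod>j\<in>H \<inter> - {x. x \<in> S}. 1)"
    by (rule prod.If_cases) (rule assms(1))
  also have "H \<inter> {x. x \<in> S} = S" using assms(2) by auto
  finally show ?thesis by simp
qed

lemma card_wset: "card (wset n w) = (n choose w) * 2^w"
proof -
  define Y where "Y = {S. S \<subseteq> {..<n} \<and> card S = w}"
  define \<phi> where "\<phi> = (\<lambda>e::nat\<Rightarrow>3. {j. j<n \<and> e j \<noteq> 0})"
  have hwphi: "hw n e = card (\<phi> e)" for e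
    unfolding hw_def \<phi>_def by (rule arg_cong[where f=card]) auto
  have finY: "finite Y" unfolding Y_def by (simp add: finite_subset)
  have finW: "finite (wset n w)" using fin_vecs[of n] unfolding wset_def by simp
  have im: "\<phi> ` wset n w \<subseteq> Y" unfolding Y_def wset_def using hwphi by (auto simp: \<phi>_def)
  have fib: "card {e \<in> wset n w. \<phi> e = S} = 2^w" if S: "S \<in> Y" for S
  proof -
    have "{e \<in> wset n w. \<phi> e = S} = {e \<in> vecs n. \<forall>j<n. e j \<in> (if j \<in> S then {1,2} else {0})}"
    proof (rule set_eqI, rule iffI)
      fix e assume "e \<in> {e \<in> wset n w. \<phi> e = S}"
      then show "e \<in> {e \<in> vecs n. \<forall>j<n. e j \<in> (if j \<in> S then {1,2} else {0})}"
        using nz3 by (auto simp: wset_def \<phi>_def)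
    next
      fix e assume e: "e \<in> {e \<in> vecs n. \<forall>j<n. e j \<in> (if j \<in> S then {1,2} else {0})}"
      have "\<phi> e = S"
      proof
        show "\<phi> e \<subseteq> S"
        proof
          fix j assume "j \<in> \<phi> e"
          then have "j < n" "e j \<noteq> 0" by (auto simp: \<phi>_def)
          then show "j \<in> S" using e by (cases "j \<in> S") auto
        qed
        show "S \<subseteq> \<phi> e" using e S by (force simp: \<phi>_def Y_def)
      qed
      then show "e \<in> {e \<in> wset n w. \<phi> e = S}"
        using e S hwphi[of e] by (simp add: wset_def Y_def)
    qed
    then have "card {e \<in> wset n w. \<phi> e = S} = (\<Prod>j<n. card (if j \<in> S then {1,2::3} else {0}))"
      using card_single by simp
    also have "\<dots> = (\<Prod>j<n. if j \<in> S then 2 else 1)"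
      by (rule prod.cong) auto
    also have "\<dots> = 2 ^ card S" using S by (intro prod_ind) (auto simp: Y_def)
    finally show ?thesis using S by (simp add: Y_def)
  qed
  have "card (wset n w) = (\<Sum>S\<in>Y. card {e \<in> wset n w. \<phi> e = S})"
    by (rule card_fibers[OF finY finW im])
  also have "\<dots> = (\<Sum>S\<in>Y. 2^w)" using fib by simp
  also have "\<dots> = card Y * 2^w" by simp
  also have "card Y = n choose w" unfolding Y_def using n_subsets[of "{..<n}" w] by simp
  finally show ?thesis .
qed

lemma sum_double: "(\<Sum>j<h+h. (g::nat\<Rightarrow>nat) j) = (\<Sum>j<h. g j) + (\<Sum>j<h. g (j+h))"
proof -
  have "(\<Sum>j<h+h. g j) = sum g {0..<h+h}" by (simp add: atLeast0LessThan)
  also have "\<dots> = sum g {0..<h} + sum g {h..<h+h}" by (rule sum.atLeastLessThan_concat[symmetric]) auto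
  also have "sum g {h..<h+h} = sum g {0+h..<h+h}" by simp
  also have "\<dots> = (\<Sum>j=0..<h. g (j+h))" by (rule sum.shift_bounds_nat_ivl)
  finally show ?thesis by (simp add: atLeast0LessThan)
qed
lemma card_filter_sum: "finite A \<Longrightarrow> card {j\<in>A. P j} = (\<Sum>j\<in>A. if P j then 1 else 0)"
  by (simp add: sum.inter_filter[symmetric])

definition TT :: "nat \<Rightarrow> (nat \<Rightarrow> 3) \<Rightarrow> (nat \<Rightarrow> 3) \<Rightarrow> (nat \<Rightarrow> 3) \<Rightarrow> nat set" where
  "TT h a c e = {j. j < h \<and> - c j * e j + a j * e (j+h) \<noteq> 0}"
definition AA :: "nat \<Rightarrow> (nat \<Rightarrow> 3) \<Rightarrow> nat set" where
  "AA h e = {j. j < h \<and> pw (e j) (e (j+h)) = 1}"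
definition CC :: "nat \<Rightarrow> (nat \<Rightarrow> 3) \<Rightarrow> (nat \<Rightarrow> 3) \<Rightarrow> (nat \<Rightarrow> 3) \<Rightarrow> nat set" where
  "CC h a c e = {j. j < h \<and> pw (e j) (e (j+h)) = 2 \<and> - c j * e j + a j * e (j+h) = 0}"

lemma hw_pairs:
  assumes "e \<in> vecs (2*h)"
  shows "hw (2*h) e = (\<Sum>j<h. pw (e j) (e (j+h)))"
proof -
  have "{j \<in> {0..<2*h}. e j \<noteq> 0} = {j \<in> {..<h+h}. e j \<noteq> 0}" by auto
  then have "hw (2*h) e = card {j \<in> {..<h+h}. e j \<noteq> 0}" unfolding hw_def by simp
  also have "\<dots> = (\<Sum>j<h+h. if e j \<noteq> 0 then 1 else 0)"
    by (rule card_filter_sum) simp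
  finally have "hw (2*h) e = (\<Sum>j<h+h. if e j \<noteq> 0 then 1 else 0)" .
  also have "\<dots> = (\<Sum>j<h. if e j \<noteq> 0 then 1 else 0) + (\<Sum>j<h. if e (j+h) \<noteq> 0 then 1 else 0)"
    by (rule sum_double)
  also have "\<dots> = (\<Sum>j<h. pw (e j) (e (j+h)))"
    by (simp add: pw_def sum.distrib)
  finally show ?thesis .
qed

lemma hw_eV: "hw (2*h) (eV (2*h) a c e) = card (TT h a c e)"
  unfolding hw_def eV_def TT_def by (rule arg_cong[where f=card]) auto

lemma card_pair_set:
  fixes e :: "nat \<Rightarrow> 3" and j h :: nat
  assumes "j < h"
  shows "card {k \<in> {j, j+h}. e k \<noteq> 0} = pw (e j) (e (j+h))"
proof -
  have ne: "j \<noteq> j + h" using assms by arith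
  show ?thesis
  proof (cases "e j = 0"; cases "e (j+h) = 0")
    assume "e j = 0" "e (j+h) = 0"
    then have "{k \<in> {j, j+h}. e k \<noteq> 0} = {}" by auto
    then show ?thesis using \<open>e j = 0\<close> \<open>e (j+h) = 0\<close> by (simp add: pw_def)
  next
    assume "e j = 0" "e (j+h) \<noteq> 0"
    then have "{k \<in> {j, j+h}. e k \<noteq> 0} = {j+h}" by auto
    then show ?thesis using \<open>e j = 0\<close> \<open>e (j+h) \<noteq> 0\<close> by (simp add: pw_def)
  next
    assume "e j \<noteq> 0" "e (j+h) = 0"
    then have "{k \<in> {j, j+h}. e k \<noteq> 0} = {j}" by auto
    then show ?thesis using \<open>e j \<noteq> 0\<close> \<open>e (j+h) = 0\<close> by (simp add: pw_def)
  next
    assume "e j \<noteq> 0" "e (j+h) \<noteq> 0"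
    then have "{k \<in> {j, j+h}. e k \<noteq> 0} = {j, j+h}" by auto
    then show ?thesis using \<open>e j \<noteq> 0\<close> \<open>e (j+h) \<noteq> 0\<close> ne by (simp add: pw_def)
  qed
qed

lemma m1_AA: "m1 (2*h) e = card (AA h e)"
proof -
  have "{j \<in> {0..<2*h div 2}. card {k \<in> {j, j + 2*h div 2}. e k \<noteq> 0} = 1} = AA h e"
  proof (rule set_eqI)
    fix j
    show "j \<in> {j \<in> {0..<2*h div 2}. card {k \<in> {j, j + 2*h div 2}. e k \<noteq> 0} = 1} \<longleftrightarrow> j \<in> AA h e"
    proof (cases "j < h")
      case True then show ?thesis using card_pair_set[OF True, of e] by (simp add: AA_def)
    next
      case False then show ?thesis by (simp add: AA_def)
    qed
  qed
  then show ?thesis unfolding m1_def by simp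
qed

lemma sum_ind: assumes "finite H" "S \<subseteq> H"
  shows "(\<Sum>j\<in>H. if j \<in> S then k else 0) = (k::nat) * card S"
proof -
  have "(\<Sum>j\<in>H. if j \<in> S then k else 0) = (\<Sum>j\<in>H \<inter> {x. x \<in> S}. k) + (\<Sum>j\<in>H \<inter> - {x. x \<in> S}. 0)"
    by (rule sum.If_cases) (rule assms(1))
  also have "H \<inter> {x. x \<in> S} = S" using assms(2) by auto
  finally show ?thesis by simp
qed

lemma AA_TT: assumes nz: "\<forall>j<h. a j \<noteq> 0 \<and> c j \<noteq> 0"
  shows "AA h e \<subseteq> TT h a c e"
  using pw1 nz unfolding AA_def TT_def by auto

lemma pw_sum:
  assumes nz: "\<forall>j<h. a j \<noteq> 0 \<and> c j \<noteq> 0"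
  shows "(\<Sum>j<h. pw (e j) (e (j+h))) = card (AA h e) + 2 * card (TT h a c e - AA h e) + 2 * card (CC h a c e)"
proof -
  have pt: "pw (e j) (e (j+h)) = (if j \<in> AA h e then 1 else 0) + (if j \<in> TT h a c e - AA h e then 2 else 0)
     + (if j \<in> CC h a c e then 2 else 0)" if j: "j < h" for j
  proof -
    have "pw (e j) (e (j+h)) = 0 \<or> pw (e j) (e (j+h)) = 1 \<or> pw (e j) (e (j+h)) = 2"
      using pw_le[of "e j" "e (j+h)"] by linarith
    moreover have "pw (e j) (e (j+h)) = 0 \<Longrightarrow> - c j * e j + a j * e (j+h) = 0"
      by (simp add: pw_def split: if_splits)
    moreover have "pw (e j) (e (j+h)) = 1 \<Longrightarrow> - c j * e j + a j * e (j+h) \<noteq> 0"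
      using pw1 nz j by auto
    ultimately show ?thesis using j unfolding AA_def TT_def CC_def by auto
  qed
  have "(\<Sum>j<h. pw (e j) (e (j+h))) = (\<Sum>j<h. (if j \<in> AA h e then 1 else 0) + (if j \<in> TT h a c e - AA h e then 2 else 0)
     + (if j \<in> CC h a c e then 2 else 0))" using pt by simp
  also have "\<dots> = (\<Sum>j<h. if j \<in> AA h e then 1 else 0) + (\<Sum>j<h. if j \<in> TT h a c e - AA h e then 2 else 0)
     + (\<Sum>j<h. if j \<in> CC h a c e then 2 else 0)" by (simp add: sum.distrib)
  also have "\<dots> = card (AA h e) + 2 * card (TT h a c e - AA h e) + 2 * card (CC h a c e)"
  proof -
    have f1: "(\<Sum>j<h. if j \<in> AA h e then 1 else 0) = card (AA h e)"
      using sum_ind[of "{..<h}" "AA h e" 1] by (force simp: AA_def)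
    have f2: "(\<Sum>j<h. if j \<in> TT h a c e - AA h e then 2 else 0) = 2 * card (TT h a c e - AA h e)"
      using sum_ind[of "{..<h}" "TT h a c e - AA h e" 2] by (force simp: TT_def)
    have f3: "(\<Sum>j<h. if j \<in> CC h a c e then 2 else 0) = 2 * card (CC h a c e)"
      using sum_ind[of "{..<h}" "CC h a c e" 2] by (force simp: CC_def)
    show ?thesis using f1 f2 f3 by simp
  qed
  finally show ?thesis .
qed


definition cls :: "3 \<Rightarrow> 3 \<Rightarrow> nat set \<Rightarrow> nat set \<Rightarrow> nat set \<Rightarrow> nat \<Rightarrow> (3 \<times> 3) set" where
  "cls a c T A C j = (if j \<in> A then {(x,y). pw x y = 1}
     else if j \<in> T then {(x,y). pw x y = 2 \<and> - c * x + a * y \<noteq> 0}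
     else if j \<in> C then {(x,y). pw x y = 2 \<and> - c * x + a * y = 0}
     else {(x,y). pw x y = 0})"

lemma pw0: "pw x y = 0 \<Longrightarrow> - c * x + a * y = (0::3)"
  by (simp add: pw_def split: if_splits)

lemma point:
  assumes "a \<noteq> 0" "c \<noteq> 0" "A \<subseteq> T" "C \<inter> T = {}"
  shows "((j \<in> T \<longleftrightarrow> - c * x + a * y \<noteq> 0) \<and> (j \<in> A \<longleftrightarrow> pw x y = 1) \<and>
          (j \<in> C \<longleftrightarrow> pw x y = 2 \<and> - c * x + a * y = 0)) \<longleftrightarrow> (x, y) \<in> cls a c T A C j"
proof -
  have f0: "pw x y = 0 \<Longrightarrow> - c * x + a * y = 0" by (rule pw0)
  have f1: "pw x y = 1 \<Longrightarrow> - c * x + a * y \<noteq> 0" by (rule pw1[OF assms(1,2)])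
  have f2: "pw x y \<le> 2" by (rule pw_le)
  show ?thesis unfolding cls_def using f0 f1 f2 assms(3,4) by auto
qed

lemma fiber_eq:
  assumes nz: "\<forall>j<h. a j \<noteq> 0 \<and> c j \<noteq> 0" and AT: "A \<subseteq> T" and Th: "T \<subseteq> {..<h}"
    and Ch: "C \<subseteq> {..<h} - T"
  shows "{e \<in> vecs (2*h). TT h a c e = T \<and> AA h e = A \<and> CC h a c e = C}
       = {e \<in> vecs (2*h). \<forall>j<h. (e j, e (j+h)) \<in> cls (a j) (c j) T A C j}"
proof -
  have CT: "C \<inter> T = {}" using Ch by auto
  have key: "(TT h a c e = T \<and> AA h e = A \<and> CC h a c e = C) \<longleftrightarrow>
       (\<forall>j<h. (e j, e (j+h)) \<in> cls (a j) (c j) T A C j)" for e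
  proof
    assume eq: "TT h a c e = T \<and> AA h e = A \<and> CC h a c e = C"
    show "\<forall>j<h. (e j, e (j+h)) \<in> cls (a j) (c j) T A C j"
    proof (intro allI impI)
      fix j assume j: "j < h"
      have "(j \<in> T \<longleftrightarrow> - c j * e j + a j * e (j+h) \<noteq> 0) \<and> (j \<in> A \<longleftrightarrow> pw (e j) (e (j+h)) = 1) \<and>
          (j \<in> C \<longleftrightarrow> pw (e j) (e (j+h)) = 2 \<and> - c j * e j + a j * e (j+h) = 0)"
        using eq j unfolding TT_def AA_def CC_def by auto
      then show "(e j, e (j+h)) \<in> cls (a j) (c j) T A C j"
        using point[of "a j" "c j" A T C j "e j" "e (j+h)"] nz j AT CT by blast
    qed
  next
    assume H: "\<forall>j<h. (e j, e (j+h)) \<in> cls (a j) (c j) T A C j"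
    have P: "(j \<in> T \<longleftrightarrow> - c j * e j + a j * e (j+h) \<noteq> 0) \<and> (j \<in> A \<longleftrightarrow> pw (e j) (e (j+h)) = 1) \<and>
          (j \<in> C \<longleftrightarrow> pw (e j) (e (j+h)) = 2 \<and> - c j * e j + a j * e (j+h) = 0)" if j: "j < h" for j
      using point[of "a j" "c j" A T C j "e j" "e (j+h)"] nz j AT CT H by blast
    have "TT h a c e = T" unfolding TT_def using P Th by auto
    moreover have "AA h e = A" unfolding AA_def using P Th AT by auto
    moreover have "CC h a c e = C" unfolding CC_def using P Ch by auto
    ultimately show "TT h a c e = T \<and> AA h e = A \<and> CC h a c e = C" by blast
  qed
  show ?thesis using key by blast
qed

lemma fiber_card:
  assumes nz: "\<forall>j<h. a j \<noteq> 0 \<and> c j \<noteq> 0" and AT: "A \<subseteq> T" and Th: "T \<subseteq> {..<h}"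
    and Ch: "C \<subseteq> {..<h} - T"
  shows "card {e \<in> vecs (2*h). TT h a c e = T \<and> AA h e = A \<and> CC h a c e = C}
       = 4 ^ card A * 2 ^ card (T - A) * 2 ^ card C"
proof -
  have "card {e \<in> vecs (2*h). TT h a c e = T \<and> AA h e = A \<and> CC h a c e = C}
     = (\<Prod>j<h. card (cls (a j) (c j) T A C j))"
    using fiber_eq[OF assms] card_pair by simp
  also have "\<dots> = (\<Prod>j<h. (if j \<in> A then 4 else 1) * (if j \<in> T - A then 2 else 1) * (if j \<in> C then 2 else 1))"
  proof (rule prod.cong)
    fix j assume "j \<in> {..<h}"
    then have "a j \<noteq> 0" "c j \<noteq> 0" using nz by auto
    then show "card (cls (a j) (c j) T A C j) = (if j \<in> A then 4 else 1) * (if j \<in> T - A then 2 else 1) * (if j \<in> C then 2 else 1)"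
      unfolding cls_def using card_P1 card_P0 card_PB card_PC AT Ch by auto
  qed simp
  also have "\<dots> = (\<Prod>j<h. if j \<in> A then 4 else 1) * (\<Prod>j<h. if j \<in> T - A then 2 else 1) * (\<Prod>j<h. if j \<in> C then 2 else 1)"
    by (simp add: prod.distrib)
  also have "\<dots> = 4 ^ card A * 2 ^ card (T - A) * 2 ^ card C"
  proof -
    have s1: "A \<subseteq> {..<h}" "T - A \<subseteq> {..<h}" "C \<subseteq> {..<h}" using AT Th Ch by auto
    show ?thesis
      using prod_ind[OF _ s1(1), of 4] prod_ind[OF _ s1(2), of 2] prod_ind[OF _ s1(3), of 2] by simp
  qed
  finally show ?thesis .
qed


lemma card_E_nat:
  assumes nz: "\<forall>j<h. a j \<noteq> 0 \<and> c j \<noteq> 0"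
  shows "card {e \<in> wset (2*h) w. m1 (2*h) e = p \<and> hw (2*h) (eV (2*h) a c e) = i}
     = card {(T,A,C). T \<subseteq> {..<h} \<and> card T = i \<and> A \<subseteq> T \<and> card A = p \<and> C \<subseteq> {..<h} - T
               \<and> p + 2*(i-p) + 2*card C = w} * (4 ^ p * 2 ^ (i - p) * 2 ^ ((w+p) div 2 - i))"
proof -
  define E where "E = {e \<in> wset (2*h) w. m1 (2*h) e = p \<and> hw (2*h) (eV (2*h) a c e) = i}"
  define Y where "Y = {(T,A,C). T \<subseteq> {..<h} \<and> card T = i \<and> A \<subseteq> T \<and> card A = p \<and> C \<subseteq> {..<h} - T
               \<and> p + 2*(i-p) + 2*card C = w}"
  define \<phi> where "\<phi> = (\<lambda>e. (TT h a c e, AA h e, CC h a c e))"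
  have finE: "finite E" using fin_vecs[of "2*h"] unfolding E_def wset_def by simp
  have finY: "finite Y"
  proof (rule finite_subset)
    show "Y \<subseteq> Pow {..<h} \<times> Pow {..<h} \<times> Pow {..<h}" unfolding Y_def by auto
  qed simp
  have stats: "hw (2*h) e = card (AA h e) + 2 * (card (TT h a c e) - card (AA h e)) + 2 * card (CC h a c e)
      \<and> hw (2*h) (eV (2*h) a c e) = card (TT h a c e) \<and> m1 (2*h) e = card (AA h e)
      \<and> AA h e \<subseteq> TT h a c e \<and> TT h a c e \<subseteq> {..<h} \<and> CC h a c e \<subseteq> {..<h} - TT h a c e"
    if e: "e \<in> vecs (2*h)" for e
  proof -
    have fT: "finite (TT h a c e)" unfolding TT_def by simp
    have sub: "AA h e \<subseteq> TT h a c e" by (rule AA_TT[OF nz])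
    have "card (TT h a c e - AA h e) = card (TT h a c e) - card (AA h e)"
      using card_Diff_subset[OF finite_subset[OF sub fT] sub] .
    then show ?thesis using hw_pairs[OF e] pw_sum[OF nz, of e] hw_eV m1_AA sub
      unfolding TT_def CC_def by auto
  qed
  have im: "\<phi> ` E \<subseteq> Y"
  proof
    fix y assume "y \<in> \<phi> ` E"
    then obtain e where e: "e \<in> E" "y = \<phi> e" by auto
    then have ev: "e \<in> vecs (2*h)" unfolding E_def wset_def by simp
    have fT: "finite (TT h a c e)" unfolding TT_def by simp
    have "card (AA h e) \<le> card (TT h a c e)" using stats[OF ev] card_mono[OF fT] by blast
    then show "y \<in> Y" using stats[OF ev] e unfolding E_def Y_def \<phi>_def wset_def by auto
  qed
  have fib: "card {e \<in> E. \<phi> e = y} = 4 ^ p * 2 ^ (i - p) * 2 ^ ((w+p) div 2 - i)" if y: "y \<in> Y" for y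
  proof -
    obtain T A C where yT: "y = (T, A, C)" by (cases y) auto
    have T: "T \<subseteq> {..<h}" "card T = i" "A \<subseteq> T" "card A = p" "C \<subseteq> {..<h} - T"
       "p + 2*(i-p) + 2*card C = w" using y yT unfolding Y_def by auto
    have fT: "finite T" using T(1) finite_subset by blast
    have cTA: "card (T - A) = i - p" using card_Diff_subset[OF finite_subset[OF T(3) fT] T(3)] T by simp
    have pi: "p \<le> i" using card_mono[OF fT T(3)] T by simp
    have ck: "card C = (w+p) div 2 - i" using T(6) pi by linarith
    have "{e \<in> E. \<phi> e = y} = {e \<in> vecs (2*h). TT h a c e = T \<and> AA h e = A \<and> CC h a c e = C}"
    proof (rule set_eqI, rule iffI)
      fix e assume "e \<in> {e \<in> E. \<phi> e = y}"
      then show "e \<in> {e \<in> vecs (2*h). TT h a c e = T \<and> AA h e = A \<and> CC h a c e = C}"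
        unfolding E_def wset_def \<phi>_def yT by auto
    next
      fix e assume e: "e \<in> {e \<in> vecs (2*h). TT h a c e = T \<and> AA h e = A \<and> CC h a c e = C}"
      then have ev: "e \<in> vecs (2*h)" by simp
      show "e \<in> {e \<in> E. \<phi> e = y}"
        using stats[OF ev] e T unfolding E_def wset_def \<phi>_def yT by auto
    qed
    then have "card {e \<in> E. \<phi> e = y} = 4 ^ card A * 2 ^ card (T - A) * 2 ^ card C"
      using fiber_card[OF nz T(3) T(1) T(5)] by simp
    then show ?thesis using cTA ck T by simp
  qed
  have "card E = (\<Sum>y\<in>Y. card {e \<in> E. \<phi> e = y})" by (rule card_fibers[OF finY finE im])
  also have "\<dots> = card Y * (4 ^ p * 2 ^ (i - p) * 2 ^ ((w+p) div 2 - i))" using fib by simp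
  finally show ?thesis unfolding E_def Y_def .
qed


lemma ar_lemma: assumes "even (w+p)" "p \<le> i" "2*i \<le> w+(p::nat)" 
  shows "(p + 2*(i-p) + 2*x = w) \<longleftrightarrow> x = (w+p) div 2 - i"
proof -
  from assms(1) obtain m where m: "w + p = 2*m" by (rule evenE)
  then have "(w+p) div 2 = m" by simp
  then show ?thesis using m assms(2,3) by arith
qed

lemma card_Y:
  "card {(T,A,C). T \<subseteq> {..<h} \<and> card T = i \<and> A \<subseteq> T \<and> card A = p \<and> C \<subseteq> {..<h} - T
               \<and> p + 2*(i-p) + 2*card C = w}
   = (if even (w+p) \<and> p \<le> i \<and> 2*i \<le> w+p then (h choose i) * (i choose p) * ((h-i) choose ((w+p) div 2 - i)) else 0)"
  (is "card ?Y = _")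
proof (cases "even (w+p) \<and> p \<le> i \<and> 2*i \<le> w+p")
  case True
  define k where "k = (w+p) div 2 - i"
  have finS: "finite {A. A \<subseteq> X \<and> card A = q}" if "finite X" for X :: "nat set" and q
    by (rule finite_subset[of _ "Pow X"]) (use that in auto)
  have "?Y = (SIGMA T:{T. T \<subseteq> {..<h} \<and> card T = i}. SIGMA A:{A. A \<subseteq> T \<and> card A = p}. {C. C \<subseteq> {..<h} - T \<and> card C = k})"
  proof -
    have ar: "\<And>x. (p + 2*(i-p) + 2*x = w) \<longleftrightarrow> x = k" using True ar_lemma unfolding k_def by blast
    show ?thesis
    proof (rule set_eqI)
      fix y :: "nat set \<times> nat set \<times> nat set"
      obtain T A C where yT: "y = (T, A, C)" by (cases y) auto
      show "y \<in> ?Y \<longleftrightarrow> y \<in> (SIGMA T:{T. T \<subseteq> {..<h} \<and> card T = i}. SIGMA A:{A. A \<subseteq> T \<and> card A = p}. {C. C \<subseteq> {..<h} - T \<and> card C = k})"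
        unfolding yT using ar[of "card C"] by simp
    qed
  qed
  also have "card \<dots> = (\<Sum>T\<in>{T. T \<subseteq> {..<h} \<and> card T = i}. card (SIGMA A:{A. A \<subseteq> T \<and> card A = p}. {C. C \<subseteq> {..<h} - T \<and> card C = k}))"
    by (rule card_SigmaI) (auto intro!: finS finite_cartesian_product intro: finite_subset)
  also have "\<dots> = (\<Sum>T\<in>{T. T \<subseteq> {..<h} \<and> card T = i}. (i choose p) * ((h-i) choose k))"
  proof (rule sum.cong)
    fix T assume T: "T \<in> {T. T \<subseteq> {..<h} \<and> card T = i}"
    then have fT: "finite T" using finite_subset by blast
    have "card (SIGMA A:{A. A \<subseteq> T \<and> card A = p}. {C. C \<subseteq> {..<h} - T \<and> card C = k})
       = (\<Sum>A\<in>{A. A \<subseteq> T \<and> card A = p}. card {C. C \<subseteq> {..<h} - T \<and> card C = k})"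
      by (rule card_SigmaI) (auto simp: fT intro: finite_subset)
    also have "\<dots> = (\<Sum>A\<in>{A. A \<subseteq> T \<and> card A = p}. (h - i) choose k)"
      using n_subsets[of "{..<h} - T" k] T by (simp add: card_Diff_subset fT)
    also have "\<dots> = (i choose p) * ((h-i) choose k)"
      using n_subsets[OF fT, of p] T by simp
    finally show "card (SIGMA A:{A. A \<subseteq> T \<and> card A = p}. {C. C \<subseteq> {..<h} - T \<and> card C = k}) = (i choose p) * ((h-i) choose k)" .
  qed simp
  also have "\<dots> = (h choose i) * (i choose p) * ((h-i) choose k)"
    using n_subsets[of "{..<h}" i] by simp
  finally show ?thesis using True unfolding k_def by simp
next
  case False
  have "?Y = {}"
  proof (rule ccontr)
    assume "?Y \<noteq> {}"
    then obtain T A C where m: "T \<subseteq> {..<h}" "card T = i" "A \<subseteq> T" "card A = p" "C \<subseteq> {..<h} - T"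
       "p + 2*(i-p) + 2*card C = w" by auto
    have "finite T" using m(1) finite_subset by blast
    then have "p \<le> i" using card_mono[OF _ m(3)] m by simp
    moreover have "w + p = 2 * (i + card C)" using m(6) \<open>p \<le> i\<close> by arith
    ultimately show False using False by simp
  qed
  then show ?thesis by (subst if_not_P[OF False]) (simp only: card.empty)
qed


lemma card_E_real:
  assumes nz: "\<forall>j<h. a j \<noteq> 0 \<and> c j \<noteq> 0"
  shows "real (card {e \<in> wset (2*h) w. m1 (2*h) e = p \<and> hw (2*h) (eV (2*h) a c e) = i})
     = (if even (w+p) then real (h choose i) * 2 powr (real w / 2) *
         (real (i choose p) * ibinom (h - i) (int ((w + p) div 2) - int i) * 2 powr (3 * real p / 2)) else 0)"
proof -
  have base: "card {e \<in> wset (2*h) w. m1 (2*h) e = p \<and> hw (2*h) (eV (2*h) a c e) = i}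
     = (if even (w+p) \<and> p \<le> i \<and> 2*i \<le> w+p then (h choose i) * (i choose p) * ((h-i) choose ((w+p) div 2 - i)) else 0)
        * (4 ^ p * 2 ^ (i - p) * 2 ^ ((w+p) div 2 - i))"
    using card_E_nat[OF nz, of w p i] card_Y[of h i p w] by simp
  show ?thesis
  proof (cases "even (w+p) \<and> p \<le> i \<and> 2*i \<le> w+p")
    case True
    define k where "k = (w+p) div 2 - i"
    from True have "even (w+p)" by simp
    then obtain m where m: "w + p = 2*m" by (rule evenE)
    have mdiv: "(w+p) div 2 = m" using m by simp
    have km: "k = m - i" "i \<le> m" using mdiv True unfolding k_def by auto
    have ik: "int ((w + p) div 2) - int i = int k" using km mdiv unfolding k_def by (simp add: of_nat_diff)
    have ib: "ibinom (h - i) (int ((w + p) div 2) - int i) = real ((h-i) choose k)"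
      unfolding ibinom_def ik by (auto simp: binomial_eq_0)
    have pw2: "(4::nat) ^ p * 2 ^ (i - p) * 2 ^ k = 2 ^ (p + i + k)"
    proof -
      have "(4::nat) ^ p = 2 ^ (2*p)" by (simp add: power_mult)
      then have "(4::nat) ^ p * 2 ^ (i - p) * 2 ^ k = 2 ^ (2*p + (i-p) + k)" by (simp add: power_add)
      also have "2*p + (i-p) + k = p + i + k" using True by simp
      finally show ?thesis .
    qed
    have "2 powr (real w / 2) * 2 powr (3 * real p / 2) = 2 powr (real w / 2 + 3 * real p / 2)"
      by (simp add: powr_add)
    also have "real w / 2 + 3 * real p / 2 = real (p + i + k)"
    proof -
      have "real w + real p = 2 * real m" using m by (metis of_nat_add of_nat_mult of_nat_numeral)
      then show ?thesis using km by (simp add: of_nat_diff field_simps)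
    qed
    also have "(2::real) powr real (p + i + k) = 2 ^ (p + i + k)" by (rule powr_realpow) simp
    finally have pr: "2 powr (real w / 2) * 2 powr (3 * real p / 2) = (2::real) ^ (p + i + k)" .
    have "card {e \<in> wset (2*h) w. m1 (2*h) e = p \<and> hw (2*h) (eV (2*h) a c e) = i}
       = (h choose i) * (i choose p) * ((h-i) choose k) * 2 ^ (p + i + k)"
      using base True pw2 unfolding k_def by (simp only: if_True simp_thms mult.assoc)
    then have "real (card {e \<in> wset (2*h) w. m1 (2*h) e = p \<and> hw (2*h) (eV (2*h) a c e) = i})
       = real (h choose i) * real (i choose p) * real ((h-i) choose k) * 2 ^ (p + i + k)"
      by simp
    also have "\<dots> = real (h choose i) * 2 powr (real w / 2) *
         (real (i choose p) * ibinom (h - i) (int ((w + p) div 2) - int i) * 2 powr (3 * real p / 2))"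
      using ib pr by (simp add: algebra_simps)
    finally show ?thesis using True by simp
  next
    case False
    then have c0: "card {e \<in> wset (2*h) w. m1 (2*h) e = p \<and> hw (2*h) (eV (2*h) a c e) = i} = 0"
      unfolding base if_not_P[OF False] by simp
    show ?thesis
    proof (cases "even (w+p)")
      case ev: True
      show ?thesis
      proof (cases "p \<le> i")
        case True
        then have "\<not> 2*i \<le> w+p" using False ev by simp
        then have "int ((w + p) div 2) - int i < 0" by linarith
        then have "ibinom (h - i) (int ((w + p) div 2) - int i) = 0" unfolding ibinom_def by simp
        then show ?thesis using c0 by simp
      next
        case False
        then show ?thesis using c0 by (simp add: binomial_eq_0)
      qed
    next
      case False
      then show ?thesis using c0 by simp
    qed
  qed
qed


lemma count_V:
  assumes nz: "\<forall>j<h. a j \<noteq> 0 \<and> c j \<noteq> 0"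
  shows "real (card {e \<in> wset (2*h) w. hw (2*h) (eV (2*h) a c e) = i})
     = real (h choose i) * 2 powr (real w / 2) *
       (\<Sum>p \<in> {p. p \<le> i \<and> even (w + p)}. real (i choose p) * ibinom (h - i) (int ((w + p) div 2) - int i) * 2 powr (3 * real p / 2))"
proof -
  define X where "X = {e \<in> wset (2*h) w. hw (2*h) (eV (2*h) a c e) = i}"
  have finX: "finite X" using fin_vecs[of "2*h"] unfolding X_def wset_def by simp
  have im: "m1 (2*h) ` X \<subseteq> {..i}"
  proof
    fix y assume "y \<in> m1 (2*h) ` X"
    then obtain e where e: "e \<in> X" "y = m1 (2*h) e" by auto
    have fT: "finite (TT h a c e)" unfolding TT_def by simp
    have "card (AA h e) \<le> card (TT h a c e)" by (rule card_mono[OF fT AA_TT[OF nz]])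
    then show "y \<in> {..i}" using e m1_AA hw_eV unfolding X_def by auto
  qed
  have "card X = (\<Sum>p\<in>{..i}. card {e \<in> X. m1 (2*h) e = p})"
    by (rule card_fibers[OF _ finX im]) simp
  also have "\<dots> = (\<Sum>p\<in>{..i}. card {e \<in> wset (2*h) w. m1 (2*h) e = p \<and> hw (2*h) (eV (2*h) a c e) = i})"
    unfolding X_def by (rule sum.cong) (auto intro: arg_cong[where f=card])
  finally have "real (card X) = (\<Sum>p\<in>{..i}. real (card {e \<in> wset (2*h) w. m1 (2*h) e = p \<and> hw (2*h) (eV (2*h) a c e) = i}))"
    by simp
  also have "\<dots> = (\<Sum>p\<in>{..i}. if even (w+p) then real (h choose i) * 2 powr (real w / 2) *
         (real (i choose p) * ibinom (h - i) (int ((w + p) div 2) - int i) * 2 powr (3 * real p / 2)) else 0)"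
    using card_E_real[OF nz] by simp
  also have "\<dots> = (\<Sum>p\<in>{p\<in>{..i}. even (w+p)}. real (h choose i) * 2 powr (real w / 2) *
         (real (i choose p) * ibinom (h - i) (int ((w + p) div 2) - int i) * 2 powr (3 * real p / 2)))"
    by (rule sum.inter_filter[symmetric]) simp
  also have "{p\<in>{..i}. even (w+p)} = {p. p \<le> i \<and> even (w + p)}" by auto
  finally show ?thesis unfolding X_def by (simp add: sum_distrib_left)
qed

theorem proposition5:
  fixes n w i s t :: nat and a b c d :: "nat \<Rightarrow> 3"
  assumes "even n" and "w \<le> n" and "i \<le> n div 2" and "t \<le> n div 2" and "s \<le> t"
    and "\<forall>j < n div 2. a j * d j - b j * c j = 1 \<and> a j * c j \<noteq> 0"
  shows "(q1 n w a c i =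
           real (n div 2 choose i) / (real (n choose w) * 2 powr (real w / 2)) *
           (\<Sum>p \<in> {p. p \<le> i \<and> even (w + p)}.
              real (i choose p) * ibinom (n div 2 - i) (int ((w + p) div 2) - int i)
              * 2 powr (3 * real p / 2))) \<and>
         (q2 n w a c s t =
           (if even (w + s) then
              real (t choose s) * ibinom (n div 2 - t) (int ((w + s) div 2) - int t)
                * 2 powr (3 * real s / 2)
              / (\<Sum>p \<in> {p. p \<le> t \<and> p mod 2 = w mod 2}.
                   real (t choose p) * ibinom (n div 2 - t) (int ((w + p) div 2) - int t)
                   * 2 powr (3 * real p / 2))
            else 0))"
proof -
  define h where "h = n div 2"
  have n2: "n = 2*h" using assms(1) unfolding h_def by simp
  have nz: "\<forall>j<h. a j \<noteq> 0 \<and> c j \<noteq> 0" using assms(6) unfolding h_def by auto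
  define S where "S = (\<lambda>i. \<Sum>p \<in> {p. p \<le> i \<and> even (w + p)}.
              real (i choose p) * ibinom (h - i) (int ((w + p) div 2) - int i) * 2 powr (3 * real p / 2))"
  define A where "A = (2::real) powr (real w / 2)"
  have Apos: "A > 0" unfolding A_def by simp
  have W: "real (card (wset n w)) = real (n choose w) * (A * A)"
  proof -
    have "A * A = 2 powr (real w / 2 + real w / 2)" unfolding A_def by (rule powr_add[symmetric])
    also have "real w / 2 + real w / 2 = real w" by simp
    also have "(2::real) powr real w = 2 ^ w" by (simp add: powr_realpow)
    finally show ?thesis using card_wset[of n w] by simp
  qed
  have part1: "q1 n w a c i = real (n div 2 choose i) / (real (n choose w) * 2 powr (real w / 2)) *
           (\<Sum>p \<in> {p. p \<le> i \<and> even (w + p)}.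
              real (i choose p) * ibinom (n div 2 - i) (int ((w + p) div 2) - int i)
              * 2 powr (3 * real p / 2))"
  proof -
    have "q1 n w a c i = real (h choose i) * A * S i / (real (n choose w) * (A * A))"
      unfolding q1_def W using count_V[OF nz, of w i] unfolding n2 S_def A_def by simp
    also have "\<dots> = real (h choose i) / (real (n choose w) * A) * S i"
      using Apos by (simp add: field_simps)
    finally show ?thesis unfolding S_def A_def h_def .
  qed
  have part2: "q2 n w a c s t =
           (if even (w + s) then
              real (t choose s) * ibinom (n div 2 - t) (int ((w + s) div 2) - int t)
                * 2 powr (3 * real s / 2)
              / (\<Sum>p \<in> {p. p \<le> t \<and> p mod 2 = w mod 2}.
                   real (t choose p) * ibinom (n div 2 - t) (int ((w + p) div 2) - int t)
                   * 2 powr (3 * real p / 2))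
            else 0)"
  proof -
    have num: "real (card {e \<in> wset n w. m1 n e = s \<and> hw n (eV n a c e) = t}) =
      (if even (w+s) then real (h choose t) * A *
         (real (t choose s) * ibinom (h - t) (int ((w + s) div 2) - int t) * 2 powr (3 * real s / 2)) else 0)"
      using card_E_real[OF nz, of w s t] unfolding n2 A_def .
    have den: "real (card {e \<in> wset n w. hw n (eV n a c e) = t}) = real (h choose t) * A * S t"
      using count_V[OF nz, of w t] unfolding n2 S_def A_def .
    have Sset: "{p. p \<le> t \<and> p mod 2 = w mod 2} = {p. p \<le> t \<and> even (w + p)}" by auto presburger+
    have ht: "real (h choose t) * A \<noteq> 0" using assms(4) Apos unfolding h_def by simp
    show ?thesis
    proof (cases "even (w+s)")
      case True
      have "q2 n w a c s t = (real (h choose t) * A) *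
         (real (t choose s) * ibinom (h - t) (int ((w + s) div 2) - int t) * 2 powr (3 * real s / 2))
          / ((real (h choose t) * A) * S t)"
        unfolding q2_def num den using True by simp
      also have "\<dots> = real (t choose s) * ibinom (h - t) (int ((w + s) div 2) - int t) * 2 powr (3 * real s / 2) / S t"
        by (rule mult_divide_mult_cancel_left[OF ht])
      finally show ?thesis using True unfolding S_def Sset h_def by simp
    next
      case False
      then show ?thesis unfolding q2_def num by simp
    qed
  qed
  show ?thesis using part1 part2 by blast
qed

end
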